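(* Let $\mathcal{G}\rightrightarrows M$ be a Lie groupoid and let $\overline{(\mathcal{G},\mathcal{G})}$ be the closure in $\mathcal{G}$ of $(\mathcal{G},\mathcal{G})=\bigcup_{x\in M}(\mathcal{G}_x,\mathcal{G}_x)$. If $\overline{(\mathcal{G},\mathcal{G})}$ is a subgroupoid of $\mathcal{G}$, then it is a normal subgroupoid, i.e. $h\,g\,h^{-1}\in\overline{(\mathcal{G},\mathcal{G})}$ for all $g\in\overline{(\mathcal{G},\mathcal{G})}$ and $h\in\mathcal{G}$ with $s(h)=t(g)$.
   Context: $\mathcal{G}_x=s^{-1}(x)\cap t^{-1}(x)$ is the isotropy group at $x$ and $(\mathcal{G}_x,\mathcal{G}_x)$ its commutator subgroup. Lie groupoids need not have Hausdorff arrow space; $s,t$ are submersions. *)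

theory Defs
  imports "HOL-Analysis.Analysis"
begin

text \<open>A map on an open subset S of a Euclidean space is smooth (C-infinity) iff
  all iterated partial derivatives exist; equivalently there is a family of maps
  containing f, each Frechet differentiable on S, closed under taking partial
  derivatives along the standard basis vectors.\<close>

definition smooth_on :: "'a::euclidean_space set \<Rightarrow> ('a \<Rightarrow> 'b::real_normed_vector) \<Rightarrow> bool" where
  "smooth_on S f \<longleftrightarrow>
     (\<exists>F. f \<in> F \<and>
        (\<forall>g\<in>F. \<exists>g'. (\<forall>x\<in>S. (g has_derivative g' x) (at x)) \<and>
                     (\<forall>b\<in>Basis. (\<lambda>x. g' x b) \<in> F)))"

section \<open>Smooth manifolds (not necessarily Hausdorff) given by an atlas\<close>

type_synonym ('a, 'e) atlas = "('a set \<times> ('a \<Rightarrow> 'e)) set"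

definition is_chart :: "'a topology \<Rightarrow> 'a set \<Rightarrow> ('a \<Rightarrow> 'e::euclidean_space) \<Rightarrow> bool" where
  "is_chart X U \<phi> \<longleftrightarrow> openin X U \<and> open (\<phi> ` U) \<and>
      homeomorphic_map (subtopology X U) (top_of_set (\<phi> ` U)) \<phi>"

definition manifold :: "'a topology \<Rightarrow> ('a, 'e::euclidean_space) atlas \<Rightarrow> bool" where
  "manifold X A \<longleftrightarrow>
     (\<forall>(U,\<phi>)\<in>A. is_chart X U \<phi>) \<and>
     (\<forall>x\<in>topspace X. \<exists>(U,\<phi>)\<in>A. x \<in> U) \<and>
     (\<forall>(U,\<phi>)\<in>A. \<forall>(V,\<psi>)\<in>A. smooth_on (\<phi> ` (U \<inter> V)) (\<psi> \<circ> inv_into U \<phi>))"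

definition smooth_map ::
  "'a topology \<Rightarrow> ('a, 'e::euclidean_space) atlas \<Rightarrow>
   'b topology \<Rightarrow> ('b, 'f::euclidean_space) atlas \<Rightarrow> ('a \<Rightarrow> 'b) \<Rightarrow> bool" where
  "smooth_map X A Y B f \<longleftrightarrow> continuous_map X Y f \<and>
     (\<forall>(U,\<phi>)\<in>A. \<forall>(V,\<psi>)\<in>B. smooth_on (\<phi> ` (U \<inter> f -` V)) (\<psi> \<circ> f \<circ> inv_into U \<phi>))"

definition submersion ::
  "'a topology \<Rightarrow> ('a, 'e::euclidean_space) atlas \<Rightarrow>
   'b topology \<Rightarrow> ('b, 'f::euclidean_space) atlas \<Rightarrow> ('a \<Rightarrow> 'b) \<Rightarrow> bool" where
  "submersion X A Y B f \<longleftrightarrow> smooth_map X A Y B f \<and>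
     (\<forall>(U,\<phi>)\<in>A. \<forall>(V,\<psi>)\<in>B. \<forall>x\<in>U. f x \<in> V \<longrightarrow>
        (\<exists>D. ((\<psi> \<circ> f \<circ> inv_into U \<phi>) has_derivative D) (at (\<phi> x)) \<and> surj D))"

definition prod_atlas :: "('a, 'e) atlas \<Rightarrow> ('b, 'f) atlas \<Rightarrow> ('a \<times> 'b, 'e \<times> 'f) atlas" where
  "prod_atlas A B = {(U \<times> V, \<lambda>(a,b). (\<phi> a, \<psi> b)) | U \<phi> V \<psi>. (U,\<phi>) \<in> A \<and> (V,\<psi>) \<in> B}"

definition restrict_atlas :: "'a set \<Rightarrow> ('a, 'e) atlas \<Rightarrow> ('a, 'e) atlas" where
  "restrict_atlas W A = {(U \<inter> W, \<phi>) | U \<phi>. (U,\<phi>) \<in> A}"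

text \<open>Convention: the product mul g h (that is, g h) is defined iff s g = t h.\<close>

definition groupoid ::
  "'g set \<Rightarrow> 'm set \<Rightarrow> ('g \<Rightarrow> 'm) \<Rightarrow> ('g \<Rightarrow> 'm) \<Rightarrow> ('m \<Rightarrow> 'g) \<Rightarrow>
   ('g \<Rightarrow> 'g \<Rightarrow> 'g) \<Rightarrow> ('g \<Rightarrow> 'g) \<Rightarrow> bool" where
  "groupoid G M s t u mul iv \<longleftrightarrow>
     (\<forall>g\<in>G. s g \<in> M \<and> t g \<in> M) \<and>
     (\<forall>x\<in>M. u x \<in> G \<and> s (u x) = x \<and> t (u x) = x) \<and>
     (\<forall>g\<in>G. \<forall>h\<in>G. s g = t h \<longrightarrow>
        mul g h \<in> G \<and> s (mul g h) = s h \<and> t (mul g h) = t g) \<and>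
     (\<forall>f\<in>G. \<forall>g\<in>G. \<forall>h\<in>G. s f = t g \<longrightarrow> s g = t h \<longrightarrow>
        mul (mul f g) h = mul f (mul g h)) \<and>
     (\<forall>g\<in>G. mul (u (t g)) g = g \<and> mul g (u (s g)) = g) \<and>
     (\<forall>g\<in>G. iv g \<in> G \<and> s (iv g) = t g \<and> t (iv g) = s g \<and>
        mul g (iv g) = u (t g) \<and> mul (iv g) g = u (s g))"

text \<open>Smoothness of the multiplication on the embedded submanifold of composable pairs
  is expressed by local smooth extension to open subsets of G x G.\<close>

definition lie_groupoid ::
  "'g topology \<Rightarrow> ('g, 'e::euclidean_space) atlas \<Rightarrow>
   'm topology \<Rightarrow> ('m, 'f::euclidean_space) atlas \<Rightarrow>
   ('g \<Rightarrow> 'm) \<Rightarrow> ('g \<Rightarrow> 'm) \<Rightarrow> ('m \<Rightarrow> 'g) \<Rightarrow>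
   ('g \<Rightarrow> 'g \<Rightarrow> 'g) \<Rightarrow> ('g \<Rightarrow> 'g) \<Rightarrow> bool" where
  "lie_groupoid TG AG TM AM s t u mul iv \<longleftrightarrow>
     groupoid (topspace TG) (topspace TM) s t u mul iv \<and>
     manifold TG AG \<and> manifold TM AM \<and> Hausdorff_space TM \<and>
     submersion TG AG TM AM s \<and> submersion TG AG TM AM t \<and>
     smooth_map TM AM TG AG u \<and> smooth_map TG AG TG AG iv \<and>
     (\<forall>g\<in>topspace TG. \<forall>h\<in>topspace TG. s g = t h \<longrightarrow>
        (\<exists>W F. openin (prod_topology TG TG) W \<and> (g,h) \<in> W \<and>
           smooth_map (subtopology (prod_topology TG TG) W)
                      (restrict_atlas W (prod_atlas AG AG)) TG AG F \<and>
           (\<forall>(a,b)\<in>W. a \<in> topspace TG \<longrightarrow> b \<in> topspace TG \<longrightarrow> s a = t b \<longrightarrow>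
               F (a,b) = mul a b)))"

definition isotropy :: "'g set \<Rightarrow> ('g \<Rightarrow> 'm) \<Rightarrow> ('g \<Rightarrow> 'm) \<Rightarrow> 'm \<Rightarrow> 'g set" where
  "isotropy G s t x = {g \<in> G. s g = x \<and> t g = x}"

inductive_set commutator_subgroup ::
  "'g set \<Rightarrow> ('g \<Rightarrow> 'm) \<Rightarrow> ('g \<Rightarrow> 'm) \<Rightarrow> ('m \<Rightarrow> 'g) \<Rightarrow> ('g \<Rightarrow> 'g \<Rightarrow> 'g) \<Rightarrow> ('g \<Rightarrow> 'g) \<Rightarrow> 'm \<Rightarrow> 'g set"
  for G s t u mul iv x where
  unit: "u x \<in> commutator_subgroup G s t u mul iv x"
| comm: "a \<in> isotropy G s t x \<Longrightarrow> b \<in> isotropy G s t x \<Longrightarrow>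
          mul a (mul b (mul (iv a) (iv b))) \<in> commutator_subgroup G s t u mul iv x"
| prod: "a \<in> commutator_subgroup G s t u mul iv x \<Longrightarrow> b \<in> commutator_subgroup G s t u mul iv x \<Longrightarrow>
          mul a b \<in> commutator_subgroup G s t u mul iv x"
| inverse: "a \<in> commutator_subgroup G s t u mul iv x \<Longrightarrow> iv a \<in> commutator_subgroup G s t u mul iv x"

definition subgroupoid :: "'g set \<Rightarrow> ('g \<Rightarrow> 'm) \<Rightarrow> ('g \<Rightarrow> 'm) \<Rightarrow>
   ('g \<Rightarrow> 'g \<Rightarrow> 'g) \<Rightarrow> ('g \<Rightarrow> 'g) \<Rightarrow> 'g set \<Rightarrow> bool" where
  "subgroupoid G s t mul iv H \<longleftrightarrow> H \<subseteq> G \<and>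
     (\<forall>g\<in>H. \<forall>h\<in>H. s g = t h \<longrightarrow> mul g h \<in> H) \<and> (\<forall>g\<in>H. iv g \<in> H)"

end

theory Submission
  imports Defs
begin


locale gpd =
  fixes G :: "'g set" and M :: "'m set" and s t :: "'g \<Rightarrow> 'm" and u :: "'m \<Rightarrow> 'g"
    and mul :: "'g \<Rightarrow> 'g \<Rightarrow> 'g" and iv :: "'g \<Rightarrow> 'g"
  assumes gp: "groupoid G M s t u mul iv"
begin

lemma st[simp]: "g \<in> G \<Longrightarrow> s g \<in> M" "g \<in> G \<Longrightarrow> t g \<in> M"
  using gp unfolding groupoid_def by auto
lemma uu[simp]: "x \<in> M \<Longrightarrow> u x \<in> G" "x \<in> M \<Longrightarrow> s (u x) = x" "x \<in> M \<Longrightarrow> t (u x) = x"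
  using gp unfolding groupoid_def by auto
lemma mm[simp]: "g \<in> G \<Longrightarrow> h \<in> G \<Longrightarrow> s g = t h \<Longrightarrow> mul g h \<in> G"
  "g \<in> G \<Longrightarrow> h \<in> G \<Longrightarrow> s g = t h \<Longrightarrow> s (mul g h) = s h"
  "g \<in> G \<Longrightarrow> h \<in> G \<Longrightarrow> s g = t h \<Longrightarrow> t (mul g h) = t g"
  using gp unfolding groupoid_def by auto
lemma assoc[simp]: "f \<in> G \<Longrightarrow> g \<in> G \<Longrightarrow> h \<in> G \<Longrightarrow> s f = t g \<Longrightarrow> s g = t h \<Longrightarrow>
        mul (mul f g) h = mul f (mul g h)"
  using gp unfolding groupoid_def by auto
lemma ii[simp]: "g \<in> G \<Longrightarrow> iv g \<in> G" "g \<in> G \<Longrightarrow> s (iv g) = t g" "g \<in> G \<Longrightarrow> t (iv g) = s g"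
  using gp unfolding groupoid_def by auto
lemma unitl[simp]: "g \<in> G \<Longrightarrow> x = t g \<Longrightarrow> mul (u x) g = g"
  using gp unfolding groupoid_def by auto
lemma unitr[simp]: "g \<in> G \<Longrightarrow> x = s g \<Longrightarrow> mul g (u x) = g"
  using gp unfolding groupoid_def by auto
lemma invr[simp]: "g \<in> G \<Longrightarrow> mul g (iv g) = u (t g)"
  using gp unfolding groupoid_def by auto
lemma invl[simp]: "g \<in> G \<Longrightarrow> mul (iv g) g = u (s g)"
  using gp unfolding groupoid_def by auto
lemma invl2[simp]: "a \<in> G \<Longrightarrow> q \<in> G \<Longrightarrow> s a = t q \<Longrightarrow> mul (iv a) (mul a q) = q"
  by (metis assoc ii invl unitl)
lemma invr2[simp]: "a \<in> G \<Longrightarrow> q \<in> G \<Longrightarrow> t a = t q \<Longrightarrow> mul a (mul (iv a) q) = q"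
  by (metis assoc ii invr unitl)

lemma inv_unique: "g \<in> G \<Longrightarrow> h \<in> G \<Longrightarrow> s g = t h \<Longrightarrow> mul g h = u (t g) \<Longrightarrow> h = iv g"
  by (metis ii(1,2) invl2 unitr)

lemma comm_iso: assumes "x \<in> M" "k \<in> commutator_subgroup G s t u mul iv x" shows "k \<in> isotropy G s t x"
  using assms(2,1) by (induction rule: commutator_subgroup.induct) (auto simp: isotropy_def)

lemma conj_iso: "a \<in> G \<Longrightarrow> p \<in> isotropy G s t (s a) \<Longrightarrow> mul a (mul p (iv a)) \<in> isotropy G s t (t a)"
  by (auto simp: isotropy_def)

lemma conj_mul: "a \<in> G \<Longrightarrow> p \<in> isotropy G s t (s a) \<Longrightarrow> q \<in> isotropy G s t (s a) \<Longrightarrow>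
   mul a (mul (mul p q) (iv a)) = mul (mul a (mul p (iv a))) (mul a (mul q (iv a)))"
  by (auto simp: isotropy_def)

lemma conj_inv: "a \<in> G \<Longrightarrow> p \<in> isotropy G s t (s a) \<Longrightarrow>
   mul a (mul (iv p) (iv a)) = iv (mul a (mul p (iv a)))"
  apply (rule inv_unique)
  apply (auto simp: isotropy_def)
  done

lemma conj_comm: assumes "k \<in> commutator_subgroup G s t u mul iv x" "x = s a" "a \<in> G" shows
   "mul a (mul k (iv a)) \<in> commutator_subgroup G s t u mul iv (t a)"
  using assms
proof (induction k rule: commutator_subgroup.induct)
  case unit
  then show ?case by (simp add: commutator_subgroup.unit)
next
  case (comm p q)
  have "mul a (mul (mul p (mul q (mul (iv p) (iv q)))) (iv a)) =
     mul (mul a (mul p (iv a))) (mul (mul a (mul q (iv a))) (mul (iv (mul a (mul p (iv a)))) (iv (mul a (mul q (iv a))))))"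
    using comm by (simp add: conj_mul[symmetric] conj_inv[symmetric] isotropy_def del: assoc)
  then show ?case using comm by (metis commutator_subgroup.comm conj_iso)
next
  case (prod p q)
  then show ?case using comm_iso[of "s a" p] comm_iso[of "s a" q]
    by (metis commutator_subgroup.prod conj_mul st(1))
next
  case (inverse p)
  then show ?case using comm_iso[of "s a" p]
    by (metis commutator_subgroup.inverse conj_inv st(1))
qed
end


lemma chart_facts:
  assumes "is_chart X U \<phi>"
  shows "openin X U" "open (\<phi> ` U)" "inj_on \<phi> U" "U \<subseteq> topspace X"
    "continuous_map (subtopology X U) euclidean \<phi>"
    "\<And>W. openin X W \<Longrightarrow> W \<subseteq> U \<Longrightarrow> open (\<phi> ` W)"
proof -
  have hm: "homeomorphic_map (subtopology X U) (top_of_set (\<phi> ` U)) \<phi>" and oU: "openin X U"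
    and o: "open (\<phi> ` U)"
    using assms unfolding is_chart_def by auto
  show "openin X U" "open (\<phi> ` U)" by fact+
  show sub: "U \<subseteq> topspace X" using oU openin_subset by blast
  show "inj_on \<phi> U" using homeomorphic_imp_injective_map[OF hm] sub
    by (simp add: Int_absorb1)
  show "continuous_map (subtopology X U) euclidean \<phi>"
    using homeomorphic_imp_continuous_map[OF hm] continuous_map_in_subtopology by blast
  fix W assume W: "openin X W" "W \<subseteq> U"
  have "openin (subtopology X U) W" using W unfolding openin_subtopology by blast 
  then have "openin (top_of_set (\<phi> ` U)) (\<phi> ` W)"
    using homeomorphic_map_openness[OF hm] W sub by (metis openin_subset) 
  then show "open (\<phi> ` W)" using o openin_open_trans by blast
qed

lemma submersion_open:
  fixes A :: "('a, 'e::euclidean_space) atlas" and B :: "('b, 'f::euclidean_space) atlas"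
  assumes mX: "manifold X A" and mY: "manifold Y B" and sm: "submersion X A Y B f"
    and H: "openin X H" "h \<in> H"
  shows "\<exists>V. openin Y V \<and> f h \<in> V \<and> V \<subseteq> f ` H"
proof -
  have hX: "h \<in> topspace X" using H openin_subset by blast
  have cf: "continuous_map X Y f" using sm unfolding submersion_def smooth_map_def by auto
  have fhY: "f h \<in> topspace Y" using cf hX continuous_map_image_subset_topspace by blast
  obtain U \<phi> where U: "(U,\<phi>) \<in> A" "h \<in> U" using mX hX unfolding manifold_def by blast
  obtain V0 \<psi> where V0: "(V0,\<psi>) \<in> B" "f h \<in> V0" using mY fhY unfolding manifold_def by blast
  have cU: "is_chart X U \<phi>" using mX U unfolding manifold_def by auto
  have cV: "is_chart Y V0 \<psi>" using mY V0 unfolding manifold_def by auto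
  define W where "W = U \<inter> H \<inter> {x \<in> topspace X. f x \<in> V0}"
  have oW: "openin X W" unfolding W_def
    using chart_facts(1)[OF cU] chart_facts(1)[OF cV] H(1) cf
    by (intro openin_Int openin_continuous_map_preimage) auto
  define S where "S = \<phi> ` W"
  have oS: "open S" unfolding S_def using chart_facts(6)[OF cU oW] W_def by auto
  define g where "g = \<psi> \<circ> f \<circ> inv_into U \<phi>"
  have smo: "smooth_on (\<phi> ` (U \<inter> f -` V0)) g"
    proof -
    have "\<forall>(U,\<phi>)\<in>A. \<forall>(V,\<psi>)\<in>B. smooth_on (\<phi> ` (U \<inter> f -` V)) (\<psi> \<circ> f \<circ> inv_into U \<phi>)"
      using sm unfolding submersion_def smooth_map_def by blast
    from bspec[OF this U(1)] have "\<forall>(V,\<psi>)\<in>B. smooth_on (\<phi> ` (U \<inter> f -` V)) (\<psi> \<circ> f \<circ> inv_into U \<phi>)" by simp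
    from bspec[OF this V0(1)] show ?thesis unfolding g_def by simp
  qed
  have SS: "S \<subseteq> \<phi> ` (U \<inter> f -` V0)" unfolding S_def W_def by auto
  have cont: "continuous_on S g"
  proof -
    obtain F where "g \<in> F" and "\<forall>g\<in>F. \<exists>g'. (\<forall>x\<in>\<phi> ` (U \<inter> f -` V0). (g has_derivative g' x) (at x))"
      using smo unfolding smooth_on_def by blast
    then obtain g' where "\<forall>x\<in>\<phi> ` (U \<inter> f -` V0). (g has_derivative g' x) (at x)" by blast
    then show ?thesis using SS
      by (meson continuous_at_imp_continuous_on has_derivative_continuous subsetD)
  qed
  obtain D where D: "(g has_derivative D) (at (\<phi> h))" "surj D"
    proof -
    have "\<forall>(U,\<phi>)\<in>A. \<forall>(V,\<psi>)\<in>B. \<forall>x\<in>U. f x \<in> V \<longrightarrow>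
        (\<exists>D. ((\<psi> \<circ> f \<circ> inv_into U \<phi>) has_derivative D) (at (\<phi> x)) \<and> surj D)"
      using sm unfolding submersion_def by blast
    from bspec[OF this U(1)] have "\<forall>(V,\<psi>)\<in>B. \<forall>x\<in>U. f x \<in> V \<longrightarrow>
        (\<exists>D. ((\<psi> \<circ> f \<circ> inv_into U \<phi>) has_derivative D) (at (\<phi> x)) \<and> surj D)" by simp
    from bspec[OF this V0(1)] have "\<forall>x\<in>U. f x \<in> V0 \<longrightarrow>
        (\<exists>D. ((\<psi> \<circ> f \<circ> inv_into U \<phi>) has_derivative D) (at (\<phi> x)) \<and> surj D)" by simp
    then show ?thesis using that U(2) V0(2) unfolding g_def by blast
  qed
  have "linear D" using D(1) has_derivative_linear by blast
  then obtain gi where gi: "linear gi" "D \<circ> gi = id"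
    using D(2) real_vector.linear_surjective_right_inverse by blast
  have phS: "\<phi> h \<in> S" unfolding S_def W_def using U H V0 hX by auto
  have "g (\<phi> h) \<in> interior (g ` S)"
    using sussmann_open_mapping[OF oS cont phS D(1) _ gi(2) order_refl] gi(1) oS phS
    by (simp add: interior_open linear_conv_bounded_linear)
  moreover have "g (\<phi> h) = \<psi> (f h)" unfolding g_def using chart_facts(3)[OF cU] U by simp
  ultimately have inO: "\<psi> (f h) \<in> interior (g ` S)" by simp
  define V where "V = {y \<in> topspace (subtopology Y V0). \<psi> y \<in> interior (g ` S)}"
  have "openin (subtopology Y V0) V" unfolding V_def
    using chart_facts(5)[OF cV] by (intro openin_continuous_map_preimage) auto
  then have oV: "openin Y V" using chart_facts(1)[OF cV] openin_trans_full by blast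
  have "V \<subseteq> f ` H"
  proof
    fix y assume y: "y \<in> V"
    then have "\<psi> y \<in> g ` S" using interior_subset V_def by blast
    then obtain w where w: "w \<in> W" "\<psi> y = g (\<phi> w)" unfolding S_def by auto
    have "g (\<phi> w) = \<psi> (f w)" unfolding g_def using chart_facts(3)[OF cU] w W_def by simp
    moreover have "y \<in> V0" "f w \<in> V0" using y w V_def W_def by auto
    ultimately have "y = f w" using w chart_facts(3)[OF cV] by (metis inj_on_def)
    then show "y \<in> f ` H" using w W_def by auto
  qed
  moreover have "f h \<in> V" unfolding V_def using inO V0 fhY by auto
  ultimately show ?thesis using oV by blast
qed


lemma mul_cont:
  assumes L: "lie_groupoid TG AG TM AM s t u mul iv" and p: "p \<in> topspace TG" "q \<in> topspace TG" "s p = t q"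
    and Ob: "openin TG Ob" "mul p q \<in> Ob"
  shows "\<exists>P Q. openin TG P \<and> openin TG Q \<and> p \<in> P \<and> q \<in> Q \<and>
     (\<forall>a\<in>P. \<forall>b\<in>Q. a \<in> topspace TG \<longrightarrow> b \<in> topspace TG \<longrightarrow> s a = t b \<longrightarrow> mul a b \<in> Ob)"
proof -
  obtain W F where W: "openin (prod_topology TG TG) W" "(p,q) \<in> W"
    and sF: "smooth_map (subtopology (prod_topology TG TG) W) (restrict_atlas W (prod_atlas AG AG)) TG AG F"
    and FW: "\<forall>(a,b)\<in>W. a \<in> topspace TG \<longrightarrow> b \<in> topspace TG \<longrightarrow> s a = t b \<longrightarrow> F (a,b) = mul a b"
  proof -
    have "\<forall>g\<in>topspace TG. \<forall>h\<in>topspace TG. s g = t h \<longrightarrow>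
        (\<exists>W F. openin (prod_topology TG TG) W \<and> (g,h) \<in> W \<and>
           smooth_map (subtopology (prod_topology TG TG) W)
                      (restrict_atlas W (prod_atlas AG AG)) TG AG F \<and>
           (\<forall>(a,b)\<in>W. a \<in> topspace TG \<longrightarrow> b \<in> topspace TG \<longrightarrow> s a = t b \<longrightarrow>
               F (a,b) = mul a b))" using L by (simp add: lie_groupoid_def)
    then show ?thesis using p that by blast
  qed
  have cF: "continuous_map (subtopology (prod_topology TG TG) W) TG F" using sF unfolding smooth_map_def by (rule conjunct1)
  define Z where "Z = {z \<in> topspace (subtopology (prod_topology TG TG) W). F z \<in> Ob}"
  have "openin (subtopology (prod_topology TG TG) W) Z" unfolding Z_def
    using cF Ob(1) by (rule openin_continuous_map_preimage)
  then have oZ: "openin (prod_topology TG TG) Z" using W(1) by (rule openin_trans_full)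
  have Fpq: "F (p,q) = mul p q" using bspec[OF FW W(2)] p by simp
  have pqZ: "(p,q) \<in> Z" unfolding Z_def using p W(2) Fpq Ob(2) by simp
  from oZ[unfolded openin_prod_topology_alt, rule_format, OF pqZ] obtain P Q where
    PQ: "openin TG P" "openin TG Q" "p \<in> P" "q \<in> Q" "P \<times> Q \<subseteq> Z" by blast
  have key: "\<forall>a\<in>P. \<forall>b\<in>Q. a \<in> topspace TG \<longrightarrow> b \<in> topspace TG \<longrightarrow> s a = t b \<longrightarrow> mul a b \<in> Ob"
  proof (intro ballI impI)
    fix a b assume ab: "a \<in> P" "b \<in> Q" "a \<in> topspace TG" "b \<in> topspace TG" "s a = t b"
    then have "(a,b) \<in> Z" using PQ(5) by blast
    then have abW: "(a,b) \<in> W" and "F (a,b) \<in> Ob" unfolding Z_def by simp_all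
    moreover have "F (a,b) = mul a b" using bspec[OF FW abW] ab by simp
    ultimately show "mul a b \<in> Ob" by simp
  qed
  show ?thesis using PQ(1-4) key by blast
qed

theorem mainTheorem12:
  fixes TG :: "'g topology" and AG :: "('g, 'e::euclidean_space) atlas"
    and TM :: "'m topology" and AM :: "('m, 'f::euclidean_space) atlas"
    and s t :: "'g \<Rightarrow> 'm" and u :: "'m \<Rightarrow> 'g"
    and mul :: "'g \<Rightarrow> 'g \<Rightarrow> 'g" and iv :: "'g \<Rightarrow> 'g"
  defines "C \<equiv> TG closure_of (\<Union>x\<in>topspace TM. commutator_subgroup (topspace TG) s t u mul iv x)"
  assumes "lie_groupoid TG AG TM AM s t u mul iv"
    and "subgroupoid (topspace TG) s t mul iv C"
  shows "\<forall>g\<in>C. \<forall>h\<in>topspace TG. s h = t g \<longrightarrow> mul h (mul g (iv h)) \<in> C"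
proof (intro ballI impI)
  note L = assms(2)
  define G where "G = topspace TG"
  define K where "K = (\<Union>x\<in>topspace TM. commutator_subgroup G s t u mul iv x)"
  have CK: "C = TG closure_of K" unfolding C_def K_def G_def ..
  have L': "groupoid (topspace TG) (topspace TM) s t u mul iv \<and>
     manifold TG AG \<and> manifold TM AM \<and> Hausdorff_space TM \<and>
     submersion TG AG TM AM s \<and> submersion TG AG TM AM t \<and>
     smooth_map TM AM TG AG u \<and> smooth_map TG AG TG AG iv"
    using L unfolding lie_groupoid_def by (elim conjE) (intro conjI)
  have gp: "groupoid G (topspace TM) s t u mul iv" using L' unfolding G_def by (elim conjE)
  interpret gpd G "topspace TM" s t u mul iv by (rule gpd.intro[OF gp])
  have HM: "Hausdorff_space TM"
    and mG: "manifold TG AG" and mM: "manifold TM AM" and subs: "submersion TG AG TM AM s"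
    and subt: "submersion TG AG TM AM t" and siv: "smooth_map TG AG TG AG iv"
    using L' by blast+
  have cs: "continuous_map TG TM s" using subs unfolding submersion_def smooth_map_def by (elim conjE)
  have ct: "continuous_map TG TM t" using subt unfolding submersion_def smooth_map_def by (elim conjE)
  have civ: "continuous_map TG TG iv" using siv unfolding smooth_map_def by (elim conjE)
  have Kiso: "K \<subseteq> {x \<in> topspace TG. s x = t x}"
  proof
    fix k assume "k \<in> K"
    then obtain x where x: "x \<in> topspace TM" "k \<in> commutator_subgroup G s t u mul iv x"
      unfolding K_def by blast
    from comm_iso[OF x] show "k \<in> {x \<in> topspace TG. s x = t x}"
      unfolding isotropy_def G_def by simp
  qed
  have "closedin TG {x \<in> topspace TG. s x = t x}" using closedin_continuous_maps_eq[OF HM cs ct] .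
  then have Ciso: "C \<subseteq> {x \<in> topspace TG. s x = t x}"
    unfolding CK using Kiso by (rule closure_of_minimal[rotated])
  fix g h assume g: "g \<in> C" and h: "h \<in> topspace TG" and sh: "s h = t g"
  have gG: "g \<in> G" and sg: "s g = t g" using g Ciso unfolding G_def by blast+
  have hG: "h \<in> G" using h unfolding G_def .
  have TG: "topspace TG = G" unfolding G_def ..
  show "mul h (mul g (iv h)) \<in> C" unfolding CK in_closure_of TG
  proof (intro conjI allI impI)
    show "mul h (mul g (iv h)) \<in> G" using gG hG sh sg by simp
    fix N assume N: "mul h (mul g (iv h)) \<in> N \<and> openin TG N"
    have "mul g (iv h) \<in> G" "s h = t (mul g (iv h))" using gG hG sh sg by simp_all
    from mul_cont[OF L, of h "mul g (iv h)" N, unfolded TG, OF hG this] N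
    obtain P1 Q1 where PQ1: "openin TG P1" "openin TG Q1" "h \<in> P1" "mul g (iv h) \<in> Q1"
      "\<forall>a\<in>P1. \<forall>b\<in>Q1. a \<in> G \<longrightarrow> b \<in> G \<longrightarrow> s a = t b \<longrightarrow> mul a b \<in> N"
      by blast
    have "iv h \<in> G" "s g = t (iv h)" using gG hG sh sg by simp_all
    from mul_cont[OF L, of g "iv h" Q1, unfolded TG, OF gG this PQ1(2,4)]
    obtain P2 Q2 where PQ2: "openin TG P2" "openin TG Q2" "g \<in> P2" "iv h \<in> Q2"
      "\<forall>a\<in>P2. \<forall>b\<in>Q2. a \<in> G \<longrightarrow> b \<in> G \<longrightarrow> s a = t b \<longrightarrow> mul a b \<in> Q1"
      by blast
    define H where "H = P1 \<inter> {a \<in> topspace TG. iv a \<in> Q2}"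
    have oH: "openin TG H" unfolding H_def
      using PQ1(1) openin_continuous_map_preimage[OF civ PQ2(2)] by (rule openin_Int)
    have hH: "h \<in> H" unfolding H_def using PQ1(3) PQ2(4) h by simp
    obtain V where V: "openin TM V" "s h \<in> V" "V \<subseteq> s ` H"
      using submersion_open[OF mG mM subs oH hH] by (elim exE conjE)
    have opn: "openin TG (P2 \<inter> {a \<in> topspace TG. t a \<in> V})"
      using PQ2(1) openin_continuous_map_preimage[OF ct V(1)] by (rule openin_Int)
    have mem: "g \<in> P2 \<inter> {a \<in> topspace TG. t a \<in> V}" using PQ2(3) gG V(2) sh unfolding TG by simp
    have gcl: "g \<in> TG closure_of K" using g CK by simp
    have "\<exists>y. y \<in> K \<and> y \<in> P2 \<inter> {a \<in> topspace TG. t a \<in> V}"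
      using gcl[unfolded in_closure_of, THEN conjunct2, rule_format, OF conjI[OF mem opn]] .
    then obtain k where k: "k \<in> K" "k \<in> P2" "t k \<in> V" by (elim exE conjE IntE) simp
    obtain x where x: "x \<in> topspace TM" "k \<in> commutator_subgroup G s t u mul iv x"
      using k(1) unfolding K_def by (elim UN_E)
    have kx: "s k = x" "t k = x" "k \<in> G" using comm_iso[OF x] unfolding isotropy_def by simp_all
    obtain a where a: "a \<in> H" "s a = t k" using k(3) V(3) by (metis imageE subsetD)
    have aG: "a \<in> G" and aP1: "a \<in> P1" and iaQ2: "iv a \<in> Q2" using a(1) unfolding H_def TG by simp_all
    have "mul k (iv a) \<in> Q1" using PQ2(5) k(2) kx aG iaQ2 a(2) by simp
    then have inN: "mul a (mul k (iv a)) \<in> N" using PQ1(5) kx aG aP1 a(2) by simp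
    have "mul a (mul k (iv a)) \<in> commutator_subgroup G s t u mul iv (t a)"
      using conj_comm[OF x(2) _ aG] a(2) kx by simp
    moreover have "t a \<in> topspace TM" using aG by simp
    ultimately have "mul a (mul k (iv a)) \<in> K" unfolding K_def by (rule UN_I[rotated])
    then show "\<exists>y. y \<in> K \<and> y \<in> N" using inN by blast
  qed
qed
end
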